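(* For every $[Q]\in\mathcal{Q}_+/\mathrm{SL}_2(\mathbb{Z})$ we have $\mathbb{M}(W(Q))=\mathbb{M}(Q)$. Conversely, for every primitive word $W\in\{L,R\}^*_{\mathrm{prim}}\setminus\{L,R\}$ there exists $Q\in\mathcal{Q}_+$ such that $\mathbb{M}(W)=\mathbb{M}(Q)$.
   Context: $\mathcal{Q}_+$ is the set of integral binary quadratic forms $Q(x,y)=ax^2+bxy+cy^2$ with discriminant $D=b^2-4ac>0$ not a perfect square, with the action of $\mathrm{SL}_2(\mathbb{Z})$ by $(Q\circ\gamma)(x,y)=Q(\alpha x+\beta y,\gamma x+\delta y)$. Put $w_Q=\frac{-b+\sqrt{D}}{2a}$ and write its regular continued fraction as $w_Q=[a_1,\dots,a_{2k},\overline{c_1,\dots,c_{2\ell}}]$ with even-length pre-period and minimal even period (if the minimal period $(c_1,\dots,c_m)$ has odd length $m$, use the doubled block of length $2m$). $W(Q)=L^{c_1}R^{c_2}\cdots L^{c_{2\ell-1}}R^{c_{2\ell}}$, a primitive word well defined up to cyclic permutation. $\{L,R\}^*_{\mathrm{prim}}$ is the set of finite nonempty primitive words (not a proper power of a shorter word) over $\{L,R\}$. Modular braid of a word: for $W\in\{L,R\}^*_{\mathrm{prim}}$ of length $m\ge2$, with $\mathrm{cyc}$ moving the first letter to the end, let $\mathrm{rank}_j(W)$ ($1\le j\le m$) be the rank of $\mathrm{cyc}^{j-1}(W)$ among the (distinct) cyclic permutations of $W$ in ascending lexicographic order with $L<R$, and $\mathrm{rank}_{m+1}(W)=\mathrm{rank}_1(W)$.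 $\mathbb{M}(W)$ is the $m$-strand braid joining the $\mathrm{rank}_j(W)$-th top point to the $\mathrm{rank}_{j+1}(W)$-th bottom point by straight segments ($1\le j\le m$), the strand from a top point whose cyclic permutation begins with $L$ passing over one whose cyclic permutation begins with $R$ at each crossing. Modular braid of a form: replacing $L$ by $0$ and $R$ by $1$ in (a cyclic permutation of) $W(Q)$ gives a rational number $x=0.\overline{0^{c_1}1^{c_2}\cdots0^{c_{2\ell-1}}1^{c_{2\ell}}}_{(2)}\in[0,1]$ in binary. Let $\mathrm{Ber}(y)=2y \bmod 1$ on $[0,1]$; the orbit of $x$ under $\mathrm{Ber}$ is periodic with period $n$ equal to the length of $W(Q)$. Place copies of $[0,1]$ on a top and a bottom line, and for each point $y$ of the orbit join $y$ on top to $\mathrm{Ber}(y)$ on the bottom by a straight segment, so that at each crossing the segment starting in $[0,1/2]$ passes over the segment starting in $[1/2,1]$. The resulting $n$-strand positive braid (points ordered by their position in $[0,1]$) is $\mathbb{M}(Q)$; it does not depend on the choice of cyclic permutation. *)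

theory Defs
  imports Complex_Main
begin

datatype letter = L | R

definition letter_code :: "letter \<Rightarrow> nat" where
  "letter_code l = (if l = L then 0 else 1)"

text \<open>Lexicographic order on words with L < R (used on words of equal length).\<close>
definition lex_less :: "letter list \<Rightarrow> letter list \<Rightarrow> bool" where
  "lex_less U V \<longleftrightarrow> (map letter_code U, map letter_code V) \<in> lexord {(a, b). a < b}"

definition primitive_word :: "letter list \<Rightarrow> bool" where
  "primitive_word W \<longleftrightarrow> W \<noteq> [] \<and> \<not> (\<exists>U k. 2 \<le> k \<and> W = concat (replicate k U))"

text \<open>A braid drawn with straight segments is recorded by: the number of strands n,
 the map sending top point i (0-based, in left-to-right order) to the bottom point
 its strand ends at, and, for each pair of crossing strands, whether the strand
 starting at top point i passes over the strand starting at top point j.\<close>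

type_synonym braid_diag = "nat \<times> (nat \<Rightarrow> nat) \<times> (nat \<Rightarrow> nat \<Rightarrow> bool)"

definition strands_cross :: "(nat \<Rightarrow> nat) \<Rightarrow> nat \<Rightarrow> nat \<Rightarrow> bool" where
  "strands_cross \<sigma> i j \<longleftrightarrow> (i < j \<and> \<sigma> j < \<sigma> i) \<or> (j < i \<and> \<sigma> i < \<sigma> j)"

definition mk_diag :: "nat \<Rightarrow> (nat \<Rightarrow> nat) \<Rightarrow> (nat \<Rightarrow> nat \<Rightarrow> bool) \<Rightarrow> braid_diag" where
  "mk_diag n \<sigma> ov =
     (n, (\<lambda>i. if i < n then \<sigma> i else 0),
      (\<lambda>i j. i < n \<and> j < n \<and> strands_cross \<sigma> i j \<and> ov i j))"

definition rots :: "letter list \<Rightarrow> letter list set" where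
  "rots W = {rotate k W | k. k < length W}"

text \<open>0-based rank (rank minus one) of a word among the cyclic permutations of W.\<close>
definition rk :: "letter list \<Rightarrow> letter list \<Rightarrow> nat" where
  "rk W V = card {U \<in> rots W. lex_less U V}"

definition rot_at :: "letter list \<Rightarrow> nat \<Rightarrow> letter list" where
  "rot_at W i = (THE V. V \<in> rots W \<and> rk W V = i)"

text \<open>Strand from top point rank_j joins bottom point rank_{j+1}, where rank_j belongs to
 cyc^(j-1)(W) and rank_{j+1} to cyc^j(W) = cyc(cyc^(j-1)(W)); cyc = rotate 1.\<close>
definition word_braid :: "letter list \<Rightarrow> braid_diag" where
  "word_braid W = mk_diag (length W)
     (\<lambda>i. rk W (rotate 1 (rot_at W i)))
     (\<lambda>i j. hd (rot_at W i) = L \<and> hd (rot_at W j) = R)"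

type_synonym qform = "int \<times> int \<times> int"

definition disc :: "qform \<Rightarrow> int" where
  "disc Q = (case Q of (a, b, c) \<Rightarrow> b^2 - 4*a*c)"

definition Qplus :: "qform set" where
  "Qplus = {Q. disc Q > 0 \<and> \<not> (\<exists>k::int. disc Q = k^2)}"

definition wQ :: "qform \<Rightarrow> real" where
  "wQ Q = (case Q of (a, b, c) \<Rightarrow> (- of_int b + sqrt (of_int (disc Q))) / (2 * of_int a))"

text \<open>Regular continued fraction: complete quotients and partial quotients (0-based,
 so cf_digit w 0 = a_1).\<close>
fun cf_rem :: "real \<Rightarrow> nat \<Rightarrow> real" where
  "cf_rem w 0 = w"
| "cf_rem w (Suc k) = 1 / (cf_rem w k - of_int \<lfloor>cf_rem w k\<rfloor>)"

definition cf_digit :: "real \<Rightarrow> nat \<Rightarrow> int" where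
  "cf_digit w k = \<lfloor>cf_rem w k\<rfloor>"

definition cf_period :: "real \<Rightarrow> nat" where
  "cf_period w = (LEAST p. 0 < p \<and> (\<exists>N. \<forall>k\<ge>N. cf_digit w (k + p) = cf_digit w k))"

definition cf_preperiod :: "real \<Rightarrow> nat" where
  "cf_preperiod w = (LEAST N. \<forall>k\<ge>N. cf_digit w (k + cf_period w) = cf_digit w k)"

definition cf_even_preperiod :: "real \<Rightarrow> nat" where
  "cf_even_preperiod w = (if even (cf_preperiod w) then cf_preperiod w else cf_preperiod w + 1)"

definition cf_even_period :: "real \<Rightarrow> nat" where
  "cf_even_period w = (if even (cf_period w) then cf_period w else 2 * cf_period w)"

text \<open>W(Q) = L^c1 R^c2 ... L^c(2l-1) R^c(2l).\<close>
definition WQ :: "qform \<Rightarrow> letter list" where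
  "WQ Q = (let w = wQ Q in
     concat (map (\<lambda>i. replicate (nat (cf_digit w (cf_even_preperiod w + i)))
                                 (if even i then L else R))
                 [0..<cf_even_period w]))"

definition Ber :: "real \<Rightarrow> real" where
  "Ber y = frac (2 * y)"

definition periodic_binary :: "nat list \<Rightarrow> real" where
  "periodic_binary ds = (\<Sum>k. real (ds ! (k mod length ds)) / 2 ^ (k + 1))"

definition form_braid :: "qform \<Rightarrow> braid_diag" where
  "form_braid Q =
     (let x = periodic_binary (map letter_code (WQ Q));
          Orb = {(Ber ^^ k) x | k. True};
          pos = (\<lambda>y. card {z \<in> Orb. z < y});
          pt = (\<lambda>i. THE y. y \<in> Orb \<and> pos y = i)
      in mk_diag (card Orb)
           (\<lambda>i. pos (Ber (pt i)))
           (\<lambda>i j. pt i \<le> 1/2 \<and> 1/2 \<le> pt j))"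

end

theory Submission
  imports Defs
begin


lemma rots_range: "W \<noteq> [] \<Longrightarrow> rots W = range (\<lambda>k. rotate k W)"
  unfolding rots_def
  by (auto, metis length_greater_0_conv mod_less_divisor rotate_conv_mod)

lemma rots_image: "rots W = (\<lambda>k. rotate k W) ` {..<length W}"
  unfolding rots_def by auto

lemma rots_rotate: "rots (rotate j W) = rots W"
proof (cases "W = []")
  case True then show ?thesis by simp
next
  case False
  have ne: "rotate j W \<noteq> []" using False by simp
  have "range (\<lambda>k. rotate k (rotate j W)) = range (\<lambda>k. rotate k W)"
  proof
    show "range (\<lambda>k. rotate k (rotate j W)) \<subseteq> range (\<lambda>k. rotate k W)"
      by (auto simp: rotate_rotate)
    show "range (\<lambda>k. rotate k W) \<subseteq> range (\<lambda>k. rotate k (rotate j W))"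
    proof
      fix V assume "V \<in> range (\<lambda>k. rotate k W)"
      then obtain k where V: "V = rotate k W" by auto
      let ?n = "length W"
      have n: "?n \<ge> 1" using False by (simp add: Suc_le_eq)
      have "j < ?n * (j+1)" using n by (metis add.commute less_add_one mult.commute mult_le_mono1 nat_mult_1 order_less_le_trans le_refl)
      hence eq: "(k + ?n*(j+1) - j) + j = k + ?n*(j+1)" by simp
      have "rotate (k + ?n*(j+1) - j) (rotate j W) = rotate ((k + ?n*(j+1) - j) + j) W"
        by (rule rotate_rotate)
      also have "\<dots> = rotate (k + ?n*(j+1)) W" by (simp only: eq)
      also have "\<dots> = rotate k W"
        by (metis mod_mult_self2 rotate_conv_mod)
      finally show "V \<in> range (\<lambda>k. rotate k (rotate j W))" using V by (metis rangeI)
    qed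
  qed
  then show ?thesis using rots_range[OF False] rots_range[OF ne] by simp
qed

lemma card_rots_le: "card (rots W) \<le> length W"
  unfolding rots_image by (metis card_image_le card_lessThan finite_lessThan)

lemma rotate_fix_card:
  assumes "rotate r V = V" "0 < r" "r < length V"
  shows "card (rots V) < length V"
proof -
  have "\<not> inj_on (\<lambda>k. rotate k V) {..<length V}"
    using assms unfolding inj_on_def
    by (metis lessThan_iff not_less0 order.strict_trans rotate0 id_apply less_irrefl)
  hence "card ((\<lambda>k. rotate k V) ` {..<length V}) \<noteq> card {..<length V}"
    using eq_card_imp_inj_on by blast
  then show ?thesis using card_rots_le[of V] unfolding rots_image by simp
qed

lemma nth_concat_replicate:
  "i < k * length U \<Longrightarrow> concat (replicate k U) ! i = U ! (i mod length U)"
proof (induction k arbitrary: i)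
  case 0 then show ?case by simp
next
  case (Suc k)
  show ?case
  proof (cases "i < length U")
    case True then show ?thesis by (simp add: nth_append)
  next
    case False
    then have "i - length U < k * length U" using Suc.prems by simp
    then show ?thesis using False Suc.IH[of "i - length U"]
      by (simp add: nth_append mod_if le_mod_geq)
  qed
qed

lemma length_concat_replicate: "length (concat (replicate k U)) = k * length U"
  by (induction k) auto

lemma power_rotate_fix:
  assumes "V = concat (replicate k U)" "2 \<le> k" "U \<noteq> []"
  shows "card (rots V) < length V"
proof -
  obtain k' where k: "k = Suc k'" using assms(2) by (cases k) auto
  have "V = U @ concat (replicate k' U)" using assms k by simp
  moreover have "replicate (Suc k') U = replicate k' U @ [U]" by (simp add: replicate_append_same)
  hence "V = concat (replicate k' U) @ U" using assms k by simp
  ultimately have "rotate (length U) V = V" by (metis rotate_append)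
  moreover have "length U < length V" using assms k
    by (cases k') (auto simp: length_concat_replicate)
  ultimately show ?thesis using rotate_fix_card assms(3) by simp
qed

lemma card_rots_power:
  assumes "card (rots V) < length V"
  shows "\<exists>U k. 2 \<le> k \<and> V = concat (replicate k U)"
proof -
  let ?n = "length V"
  have "\<not> inj_on (\<lambda>k. rotate k V) {..<?n}"
    using assms unfolding rots_image by (metis card_image card_lessThan less_irrefl)
  then obtain i j where ij: "i < ?n" "j < ?n" "i \<noteq> j" "rotate i V = rotate j V"
    unfolding inj_on_def by auto
  then obtain i j where ij: "i < j" "j < ?n" "rotate i V = rotate j V"
    by (metis linorder_neqE_nat)
  define r where "r = j - i"
  have r: "0 < r" "r < ?n" using ij r_def by auto
  have "rotate (?n - i) (rotate i V) = rotate (?n - i) (rotate j V)" using ij by simp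
  hence "rotate (?n - i + i) V = rotate (?n - i + j) V" by (simp add: rotate_rotate)
  moreover have "?n - i + i = ?n" "?n - i + j = r + ?n" using ij r_def by auto
  ultimately have rV: "rotate r V = V"
    by (metis mod_add_self2 mod_self rotate_conv_mod rotate_id)
  have per1: "V ! ((t + r) mod ?n) = V ! (t mod ?n)" for t
  proof -
    have n0: "0 < ?n" using r by linarith
    have "rotate r V ! (t mod ?n) = V ! ((r + t mod ?n) mod ?n)"
      using n0 by (intro nth_rotate) simp
    then show ?thesis using rV by (simp add: mod_add_right_eq add.commute)
  qed
  have perm: "V ! ((t + m*r) mod ?n) = V ! (t mod ?n)" for m t
  proof (induction m)
    case 0 then show ?case by simp
  next
    case (Suc m)
    have "V ! ((t + Suc m * r) mod ?n) = V ! (((t + m*r) + r) mod ?n)" by (simp add: algebra_simps)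
    also have "\<dots> = V ! ((t + m*r) mod ?n)" by (rule per1)
    finally show ?case using Suc by simp
  qed
  define g where "g = gcd r ?n"
  obtain x y where xy: "r * x = ?n * y + g" using bezout_nat[of r ?n] r g_def by auto
  have g: "0 < g" "g \<le> r" "g dvd ?n" using r g_def by (auto simp: gcd_le1_nat)
  have perg: "V ! ((t + g) mod ?n) = V ! (t mod ?n)" for t
  proof -
    have "(t + g) mod ?n = (t + g + ?n * y) mod ?n" by simp
    also have "\<dots> = (t + x * r) mod ?n" using xy by (simp add: algebra_simps)
    finally show ?thesis using perm[of t x] by simp
  qed
  have red: "V ! (t mod ?n) = V ! (t mod g)" for t
  proof (induction t rule: less_induct)
    case (less t)
    show ?case
    proof (cases "t < g")
      case True then show ?thesis using g r by simp
    next
      case False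
      then have "V ! (t mod ?n) = V ! (((t - g) + g) mod ?n)" by simp
      also have "\<dots> = V ! ((t - g) mod ?n)" by (rule perg)
      also have "\<dots> = V ! ((t - g) mod g)" using less g False by simp
      also have "\<dots> = V ! (t mod g)" using False by (simp add: le_mod_geq)
      finally show ?thesis .
    qed
  qed
  define U where "U = take g V"
  have lU: "length U = g" using U_def g r by simp
  have k2: "2 \<le> ?n div g"
  proof -
    obtain q where q: "?n = g * q" using g by (auto elim: dvdE)
    have "q \<noteq> 0" using q r g by (metis mult_0_right not_less0)
    moreover have "q \<noteq> 1" using q r g by auto
    ultimately have "2 \<le> q" by linarith
    then show ?thesis using q g by simp
  qed
  have "V = concat (replicate (?n div g) U)"
  proof (rule nth_equalityI)
    show "length V = length (concat (replicate (?n div g) U))"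
      using lU g by (simp add: length_concat_replicate)
    fix t assume t: "t < length V"
    have "concat (replicate (?n div g) U) ! t = U ! (t mod g)"
      using t lU g by (subst nth_concat_replicate) auto
    also have "\<dots> = V ! (t mod g)" using U_def g by simp
    also have "\<dots> = V ! t" using red[of t] t by simp
    finally show "V ! t = concat (replicate (?n div g) U) ! t" by simp
  qed
  then show ?thesis using k2 by blast
qed

lemma primitive_card_rots:
  assumes "primitive_word W" shows "card (rots W) = length W"
  using assms card_rots_power card_rots_le unfolding primitive_word_def
  by (metis le_neq_implies_less)

lemma card_rots_primitive:
  assumes "card (rots W) = length W" "W \<noteq> []" shows "primitive_word W"
  unfolding primitive_word_def
proof (rule conjI)
  show "W \<noteq> []" by fact
  show "\<not> (\<exists>U k. 2 \<le> k \<and> W = concat (replicate k U))"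
  proof
    assume "\<exists>U k. 2 \<le> k \<and> W = concat (replicate k U)"
    then obtain U k where "2 \<le> k" "W = concat (replicate k U)" by blast
    moreover have "U \<noteq> []" using calculation assms(2) by auto
    ultimately show False using power_rotate_fix assms(1) by fastforce
  qed
qed



definition bin :: "(nat \<Rightarrow> nat) \<Rightarrow> real" where
  "bin s = (\<Sum>k. real (s k) / 2 ^ (k + 1))"

definition bnd :: "(nat \<Rightarrow> nat) \<Rightarrow> bool" where
  "bnd s \<longleftrightarrow> (\<forall>k. s k \<le> 1)"

lemma bin_term_le: "bnd s \<Longrightarrow> real (s k) / 2 ^ (k + 1) \<le> (1/2) ^ Suc k"
  unfolding bnd_def by (simp add: divide_right_mono power_divide)

lemma summable_bin: "bnd s \<Longrightarrow> summable (\<lambda>k. real (s k) / 2 ^ (k + 1))"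
proof (rule summable_comparison_test[where g = "\<lambda>k. (1/2::real) ^ Suc k"])
  show "summable (\<lambda>k. (1/2::real) ^ Suc k)" using power_half_series by (rule sums_summable)
  assume "bnd s"
  then show "\<exists>N. \<forall>n\<ge>N. norm (real (s n) / 2 ^ (n + 1)) \<le> (1/2) ^ Suc n"
    using bin_term_le by auto
qed

lemma bnd_shift: "bnd s \<Longrightarrow> bnd (\<lambda>k. s (Suc k))"
  unfolding bnd_def by auto

lemma bin_split: assumes "bnd s" shows "bin s = (real (s 0) + bin (\<lambda>k. s (Suc k))) / 2"
proof -
  have sm: "summable (\<lambda>k. real (s k) / 2 ^ (k + 1))" using summable_bin[OF assms] .
  have "(\<Sum>k. real (s (Suc k)) / 2 ^ (Suc k + 1)) = bin s - real (s 0) / 2"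
    using suminf_split_head[OF sm] unfolding bin_def by simp
  moreover have "(\<Sum>k. real (s (Suc k)) / 2 ^ (Suc k + 1)) = (\<Sum>k. real (s (Suc k)) / 2 ^ (k + 1)) / 2"
  proof -
    have "(\<lambda>k. real (s (Suc k)) / 2 ^ (Suc k + 1)) = (\<lambda>k. real (s (Suc k)) / 2 ^ (k + 1) / 2)"
      by (simp add: field_simps)
    moreover have "(\<Sum>k. real (s (Suc k)) / 2 ^ (k + 1) / 2) = (\<Sum>k. real (s (Suc k)) / 2 ^ (k + 1)) / 2"
      by (rule suminf_divide[OF summable_bin[OF bnd_shift[OF assms]]])
    ultimately show ?thesis by simp
  qed
  ultimately show ?thesis unfolding bin_def by simp
qed

lemma bin_ge0: "bnd s \<Longrightarrow> 0 \<le> bin s"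
  unfolding bin_def by (intro suminf_nonneg summable_bin) auto

lemma bin_gt0: assumes "bnd s" "s i = 1" shows "0 < bin s"
  unfolding bin_def using assms by (intro suminf_pos2[where i = i] summable_bin) auto

lemma bin_lt1: assumes "bnd s" "s i = 0" shows "bin s < 1"
proof -
  let ?f = "\<lambda>k. (1/2::real) ^ Suc k - real (s k) / 2 ^ (k + 1)"
  have s1: "summable (\<lambda>k. (1/2::real) ^ Suc k)" using power_half_series by (rule sums_summable)
  have "0 < suminf ?f"
  proof (rule suminf_pos2[where i = i])
    show "summable ?f" using s1 summable_bin[OF assms(1)] by (rule summable_diff)
    show "0 \<le> ?f n" for n using bin_term_le[OF assms(1)] by simp
    show "0 < ?f i" using assms(2) by simp
  qed
  also have "suminf ?f = 1 - bin s"
    using suminf_diff[OF s1 summable_bin[OF assms(1)]] power_half_series unfolding bin_def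
    by (simp add: sums_iff)
  finally show ?thesis by simp
qed

lemma bin_less:
  assumes "bnd s" "bnd t" "\<forall>k<m. s k = t k" "s m = 0" "t m = 1" "m < j" "s j = 0"
  shows "bin s < bin t"
  using assms
proof (induction m arbitrary: s t j)
  case 0
  obtain j' where j: "j = Suc j'" using 0 by (cases j) auto
  have "bin (\<lambda>k. s (Suc k)) < 1" using 0 j by (intro bin_lt1[where i = j'] bnd_shift) auto
  moreover have "0 \<le> bin (\<lambda>k. t (Suc k))" using 0 by (intro bin_ge0 bnd_shift)
  ultimately show ?case using 0 bin_split[of s] bin_split[of t] by simp
next
  case (Suc m)
  obtain j' where j: "j = Suc j'" using Suc by (cases j) auto
  have "bin (\<lambda>k. s (Suc k)) < bin (\<lambda>k. t (Suc k))"
    using Suc.prems j by (intro Suc.IH[where j = j'] bnd_shift) auto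
  moreover have "s 0 = t 0" using Suc by auto
  ultimately show ?case using Suc bin_split[of s] bin_split[of t] by simp
qed

definition sq :: "letter list \<Rightarrow> nat \<Rightarrow> nat" where
  "sq W k = letter_code (W ! (k mod length W))"

definition vl :: "letter list \<Rightarrow> real" where
  "vl W = bin (sq W)"

lemma bnd_sq: "bnd (sq W)"
  unfolding bnd_def sq_def letter_code_def by auto

lemma sq_rotate1: "W \<noteq> [] \<Longrightarrow> (\<lambda>k. sq W (Suc k)) = sq (rotate 1 W)"
proof
  fix k assume ne: "W \<noteq> []"
  have "rotate 1 W ! (k mod length W) = W ! ((1 + k mod length W) mod length W)"
    using ne by (intro nth_rotate) simp
  then show "sq W (Suc k) = sq (rotate 1 W) k"
    unfolding sq_def by (simp add: mod_Suc_eq)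
qed

lemma sq_L: "L \<in> set W \<Longrightarrow> \<exists>i. sq W i = 0"
  unfolding sq_def letter_code_def
  by (metis in_set_conv_nth mod_less)

lemma sq_R: "R \<in> set W \<Longrightarrow> \<exists>i. sq W i = 1"
  unfolding sq_def letter_code_def
  by (metis in_set_conv_nth mod_less letter.distinct(1))

lemma vl_split: "W \<noteq> [] \<Longrightarrow> vl W = (real (letter_code (hd W)) + vl (rotate 1 W)) / 2"
  unfolding vl_def using bin_split[OF bnd_sq, of W] sq_rotate1[of W]
  by (simp add: sq_def hd_conv_nth)

lemma vl_bounds:
  assumes "L \<in> set W" shows "0 \<le> vl W" "vl W < 1"
  using bin_ge0[OF bnd_sq] bin_lt1[OF bnd_sq] sq_L[OF assms] unfolding vl_def by auto

lemma vl_pos: assumes "R \<in> set W" shows "0 < vl W"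
  using bin_gt0[OF bnd_sq] sq_R[OF assms] unfolding vl_def by auto

lemma Ber_vl: assumes "L \<in> set W" shows "Ber (vl W) = vl (rotate 1 W)"
proof -
  have ne: "W \<noteq> []" using assms by auto
  have "2 * vl W = of_int (int (letter_code (hd W))) + vl (rotate 1 W)"
    using vl_split[OF ne] by simp
  moreover have "frac (vl (rotate 1 W)) = vl (rotate 1 W)"
    using vl_bounds[of "rotate 1 W"] assms by (simp add: frac_eq)
  ultimately show ?thesis unfolding Ber_def by (metis frac_add_of_int_left of_int_of_nat_eq)
qed

lemma Ber_iter: assumes "L \<in> set W" shows "(Ber ^^ k) (vl W) = vl (rotate k W)"
proof (induction k)
  case 0 then show ?case by simp
next
  case (Suc k)
  have "L \<in> set (rotate k W)" using assms by simp
  then show ?case using Suc Ber_vl[of "rotate k W"] by (simp add: rotate_rotate[symmetric] rotate1_rotate_swap)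
qed

lemma vl_half:
  assumes "L \<in> set W" "R \<in> set W"
  shows "hd W = L \<Longrightarrow> vl W < 1/2" "hd W = R \<Longrightarrow> vl W > 1/2"
proof -
  have ne: "W \<noteq> []" using assms by auto
  have "vl (rotate 1 W) < 1" "0 < vl (rotate 1 W)" using vl_bounds vl_pos assms by auto
  then show "hd W = L \<Longrightarrow> vl W < 1/2" "hd W = R \<Longrightarrow> vl W > 1/2"
    using vl_split[OF ne] by (auto simp: letter_code_def)
qed

lemma lex_vl:
  assumes "lex_less U V" "length U = length V" "U \<noteq> []"
  shows "vl U < vl V"
proof -
  let ?n = "length U"
  obtain i where i: "i < ?n" "take i (map letter_code U) = take i (map letter_code V)"
      "letter_code (U ! i) < letter_code (V ! i)"
    using assms(1,2) unfolding lex_less_def lexord_take_index_conv by auto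
  have Ui: "U ! i = L" "V ! i = R" using i(3) by (cases "V!i"; cases "U!i"; simp add: letter_code_def)+
  have eqk: "sq U k = sq V k" if "k < i" for k
  proof -
    have "map letter_code U ! k = map letter_code V ! k"
      using i(2) that by (metis nth_take)
    then show ?thesis using that i(1) assms(2) unfolding sq_def by simp
  qed
  show ?thesis unfolding vl_def
  proof (rule bin_less[OF bnd_sq bnd_sq, where m = i and j = "i + ?n"])
    show "\<forall>k<i. sq U k = sq V k" using eqk by auto
    show "sq U i = 0" "sq V i = 1" using Ui i(1) assms(2) by (auto simp: sq_def letter_code_def)
    show "i < i + ?n" using assms(3) by simp
    show "sq U (i + ?n) = 0" using Ui i(1) by (simp add: sq_def letter_code_def)
  qed
qed



definition braid_bin :: "letter list \<Rightarrow> braid_diag" where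
  "braid_bin W =
     (let x = periodic_binary (map letter_code W);
          Orb = {(Ber ^^ k) x | k. True};
          pos = (\<lambda>y. card {z \<in> Orb. z < y});
          pt = (\<lambda>i. THE y. y \<in> Orb \<and> pos y = i)
      in mk_diag (card Orb)
           (\<lambda>i. pos (Ber (pt i)))
           (\<lambda>i j. pt i \<le> 1/2 \<and> 1/2 \<le> pt j))"

lemma form_braid_eq: "form_braid Q = braid_bin (WQ Q)"
  unfolding form_braid_def braid_bin_def ..

lemma mk_diag_cong:
  assumes "\<forall>i<n. \<sigma> i = \<sigma>' i" "\<forall>i<n. \<forall>j<n. ov i j = ov' i j"
  shows "mk_diag n \<sigma> ov = mk_diag n \<sigma>' ov'"
proof -
  have "strands_cross \<sigma> i j = strands_cross \<sigma>' i j" if "i < n" "j < n" for i j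
    using assms that unfolding strands_cross_def by auto
  then show ?thesis unfolding mk_diag_def using assms by (auto intro!: ext)
qed

lemma rotate_replicate': "rotate k (replicate n x) = replicate n x"
  by (rule nth_equalityI) (auto simp: nth_rotate)

lemma card_rots_LR:
  assumes "card (rots W) = length W" "2 \<le> length W"
  shows "L \<in> set W" "R \<in> set W"
proof -
  have one: False if "\<forall>y\<in>set W. y = x" for x
  proof -
    have W: "W = replicate (length W) x" using replicate_length_same[OF that] by simp
    have rk: "rotate k W = W" for k using W rotate_replicate' by metis
    have "rots W = {W}"
    proof
      show "rots W \<subseteq> {W}" unfolding rots_def using rk by auto
      show "{W} \<subseteq> rots W" unfolding rots_def using assms(2) rk[of 0] by force
    qed
    then show False using assms by simp
  qed
  show "L \<in> set W" using one[of R] by (metis letter.exhaust)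
  show "R \<in> set W" using one[of L] by (metis letter.exhaust)
qed

lemma main_braid:
  assumes cardW: "card (rots W) = length W" and n2: "2 \<le> length W"
  shows "word_braid W = braid_bin W"
proof -
  define n where "n = length W"
  define S where "S = rots W"
  have inj: "inj letter_code" unfolding inj_def letter_code_def
    by (metis letter.exhaust zero_neq_one)
  have LR: "L \<in> set W" "R \<in> set W" using card_rots_LR[OF cardW n2] by auto
  have Wne: "W \<noteq> []" using n2 by auto
  have finS: "finite S" unfolding S_def rots_image by simp
  have cardS: "card S = n" using cardW S_def n_def by simp
  have SV: "length V = n \<and> set V = set W \<and> rotate 1 V \<in> S \<and> V \<noteq> []" if VS: "V \<in> S" for V
  proof -
    obtain k where "V = rotate k W" using VS rots_range[OF Wne] S_def by auto
    moreover have "rotate1 (rotate k W) \<in> range (\<lambda>k. rotate k W)" by (metis rangeI rotate_Suc)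
    ultimately show ?thesis using rots_range[OF Wne] S_def n_def Wne by auto
  qed
  have pb: "periodic_binary (map letter_code W) = vl W"
    unfolding periodic_binary_def vl_def bin_def sq_def using Wne by simp
  have Orb: "{(Ber ^^ k) (vl W) | k. True} = vl ` S"
    unfolding S_def rots_range[OF Wne] using Ber_iter[OF LR(1)] by auto
  have lexvl: "lex_less U V \<longleftrightarrow> vl U < vl V" if "U \<in> S" "V \<in> S" for U V
  proof
    show "lex_less U V \<Longrightarrow> vl U < vl V" using lex_vl[of U V] SV[OF that(1)] SV[OF that(2)] by simp
  next
    assume lt: "vl U < vl V"
    have "(map letter_code U, map letter_code V) \<in> lexord {(a, b). a < b} \<or> map letter_code U = map letter_code V
        \<or> (map letter_code V, map letter_code U) \<in> lexord {(a, b). a < b}"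
      by (rule lexord_linear) auto
    moreover have "U \<noteq> V" using lt by auto
    ultimately have "lex_less U V \<or> lex_less V U" unfolding lex_less_def
      using inj by (auto simp: inj_map_eq_map)
    moreover have "\<not> lex_less V U" using lex_vl[of V U] SV[OF that(1)] SV[OF that(2)] lt by force
    ultimately show "lex_less U V" by blast
  qed
  have injvl: "inj_on vl S"
  proof (rule inj_onI)
    fix U V assume UV: "U \<in> S" "V \<in> S" "vl U = vl V"
    show "U = V"
    proof (rule ccontr)
      assume ne: "U \<noteq> V"
      have "(map letter_code U, map letter_code V) \<in> lexord {(a, b). a < b} \<or> map letter_code U = map letter_code V
          \<or> (map letter_code V, map letter_code U) \<in> lexord {(a, b). a < b}"
        by (rule lexord_linear) auto
      moreover have "map letter_code U \<noteq> map letter_code V"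
        using ne inj by (simp add: inj_map_eq_map)
      ultimately have "lex_less U V \<or> lex_less V U" unfolding lex_less_def by auto
      then show False using lexvl UV by auto
    qed
  qed
  have rkdef: "rk W V = card {U \<in> S. vl U < vl V}" if "V \<in> S" for V
  proof -
    have "{U \<in> rots W. lex_less U V} = {U \<in> S. vl U < vl V}" using lexvl that S_def by auto
    then show ?thesis unfolding rk_def by simp
  qed
  have posvl: "card {z \<in> vl ` S. z < vl V} = rk W V" if "V \<in> S" for V
  proof -
    have "{z \<in> vl ` S. z < vl V} = vl ` {U \<in> S. vl U < vl V}" by auto
    moreover have "card (vl ` {U \<in> S. vl U < vl V}) = card {U \<in> S. vl U < vl V}"
      using injvl by (intro card_image) (auto intro: inj_on_subset)
    ultimately show ?thesis using rkdef that by simp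
  qed
  have rklt: "rk W V < n" if "V \<in> S" for V
  proof -
    have "{U \<in> S. vl U < vl V} \<subseteq> S - {V}" by auto
    hence "card {U \<in> S. vl U < vl V} \<le> card (S - {V})" using finS by (intro card_mono) auto
    also have "\<dots> = n - 1" using cardS that finS by simp
    finally show ?thesis using rkdef that n2 n_def by simp
  qed
  have rkinj: "inj_on (rk W) S"
  proof -
    have less: "rk W U < rk W V" if "U \<in> S" "V \<in> S" "vl U < vl V" for U V
    proof -
      have "{U' \<in> S. vl U' < vl U} \<subset> {U' \<in> S. vl U' < vl V}" using that by auto
      then show ?thesis using rkdef that finS by (simp add: psubset_card_mono)
    qed
    show ?thesis
    proof (rule inj_onI)
      fix U V assume UV: "U \<in> S" "V \<in> S" "rk W U = rk W V"
      have "vl U = vl V"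
      proof (rule ccontr)
        assume "vl U \<noteq> vl V"
        then have "vl U < vl V \<or> vl V < vl U" by linarith
        then show False using less UV by fastforce
      qed
      then show "U = V" using injvl UV by (simp add: inj_on_def)
    qed
  qed
  have rkim: "rk W ` S = {..<n}"
  proof (rule card_subset_eq)
    show "finite {..<n}" by simp
    show "rk W ` S \<subseteq> {..<n}" using rklt by auto
    show "card (rk W ` S) = card {..<n}" using card_image[OF rkinj] cardS by simp
  qed
  have rot: "rot_at W i \<in> S \<and> rk W (rot_at W i) = i" if "i < n" for i
  proof -
    have "\<exists>!V. V \<in> rots W \<and> rk W V = i"
    proof -
      have "i \<in> rk W ` S" using rkim that by simp
      then obtain V where V: "V \<in> S" "rk W V = i" by blast
      show ?thesis
      proof (rule ex1I[of _ V])
        show "V \<in> rots W \<and> rk W V = i" using V S_def by simp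
        fix U assume "U \<in> rots W \<and> rk W U = i"
        then show "U = V" using inj_onD[OF rkinj, of U V] V S_def by simp
      qed
    qed
    then show ?thesis unfolding rot_at_def S_def by (rule theI')
  qed
  have pt: "(THE y. y \<in> vl ` S \<and> card {z \<in> vl ` S. z < y} = i) = vl (rot_at W i)" if "i < n" for i
  proof (rule the_equality)
    show "vl (rot_at W i) \<in> vl ` S \<and> card {z \<in> vl ` S. z < vl (rot_at W i)} = i"
      using rot[OF that] posvl by auto
    fix y assume y: "y \<in> vl ` S \<and> card {z \<in> vl ` S. z < y} = i"
    then obtain U where U: "U \<in> S" "y = vl U" by auto
    then have "rk W U = i" using posvl y by simp
    then have "U = rot_at W i" using rot[OF that] inj_onD[OF rkinj, of U "rot_at W i"] U(1) by simp
    then show "y = vl (rot_at W i)" using U by simp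
  qed
  have bb: "braid_bin W = mk_diag (card (vl ` S))
      (\<lambda>i. card {z \<in> vl ` S. z < Ber (THE y. y \<in> vl ` S \<and> card {z \<in> vl ` S. z < y} = i)})
      (\<lambda>i j. (THE y. y \<in> vl ` S \<and> card {z \<in> vl ` S. z < y} = i) \<le> 1/2 \<and>
             1/2 \<le> (THE y. y \<in> vl ` S \<and> card {z \<in> vl ` S. z < y} = j))"
    unfolding braid_bin_def Let_def pb Orb ..
  have cvS: "card (vl ` S) = n" using card_image[OF injvl] cardS by simp
  show ?thesis unfolding bb cvS word_braid_def n_def[symmetric]
  proof (rule mk_diag_cong)
    show "\<forall>i<n. rk W (rotate 1 (rot_at W i)) =
          card {z \<in> vl ` S. z < Ber (THE y. y \<in> vl ` S \<and> card {z \<in> vl ` S. z < y} = i)}"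
    proof (intro allI impI)
      fix i assume i: "i < n"
      have "L \<in> set (rot_at W i)" using SV rot i LR by auto
      then have "Ber (vl (rot_at W i)) = vl (rotate 1 (rot_at W i))" by (rule Ber_vl)
      then show "rk W (rotate 1 (rot_at W i)) =
          card {z \<in> vl ` S. z < Ber (THE y. y \<in> vl ` S \<and> card {z \<in> vl ` S. z < y} = i)}"
        using pt[OF i] posvl SV rot[OF i] by simp
    qed
    have half: "(vl (rot_at W i) \<le> 1/2 \<longleftrightarrow> hd (rot_at W i) = L) \<and>
                (1/2 \<le> vl (rot_at W i) \<longleftrightarrow> hd (rot_at W i) = R)" if "i < n" for i
    proof -
      have "L \<in> set (rot_at W i)" "R \<in> set (rot_at W i)" using SV rot that LR by auto
      then show ?thesis using vl_half[of "rot_at W i"] by (cases "hd (rot_at W i)") auto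
    qed
    show "\<forall>i<n. \<forall>j<n. (hd (rot_at W i) = L \<and> hd (rot_at W j) = R) =
       ((THE y. y \<in> vl ` S \<and> card {z \<in> vl ` S. z < y} = i) \<le> 1/2 \<and>
        1/2 \<le> (THE y. y \<in> vl ` S \<and> card {z \<in> vl ` S. z < y} = j))"
      using half pt by simp
  qed
qed



definition lt :: "bool \<Rightarrow> letter" where "lt b = (if b then L else R)"

fun enc :: "bool \<Rightarrow> nat list \<Rightarrow> letter list" where
  "enc b [] = []"
| "enc b (c # cs) = replicate c (lt b) @ enc (\<not> b) cs"

lemma enc_append: "enc b (xs @ ys) = enc b xs @ enc (if even (length xs) then b else \<not> b) ys"
  by (induction xs arbitrary: b) auto

lemma enc_concat_map:
  "concat (map (\<lambda>i. replicate (f i) (if even i then L else R)) [0..<m]) = enc True (map f [0..<m])"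
proof (induction m)
  case 0 then show ?case by simp
next
  case (Suc m)
  then show ?case by (simp add: enc_append lt_def)
qed

lemma enc_concat_replicate:
  "even (length xs) \<Longrightarrow> enc b (concat (replicate k xs)) = concat (replicate k (enc b xs))"
  by (induction k) (auto simp: enc_append)

lemma length_enc: "length (enc b es) = sum_list es"
  by (induction es arbitrary: b) auto

lemma lt_neq: "lt (\<not> b) \<noteq> lt b"
  unfolding lt_def by auto

lemma hd_enc: "es \<noteq> [] \<Longrightarrow> \<forall>e\<in>set es. 1 \<le> e \<Longrightarrow> hd (enc b es) = lt b"
  by (cases es) (auto simp: Suc_le_eq)

lemma last_enc: "es \<noteq> [] \<Longrightarrow> \<forall>e\<in>set es. 1 \<le> e \<Longrightarrow>
    last (enc b es) = lt (if odd (length es) then b else \<not> b)"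
proof (induction es arbitrary: b)
  case Nil then show ?case by simp
next
  case (Cons c cs)
  show ?case
  proof (cases "cs = []")
    case True
    then show ?thesis using Cons by (cases c) auto
  next
    case False
    have ne: "enc (\<not> b) cs \<noteq> []" using False Cons.prems
      by (cases cs) (auto simp: Suc_le_eq)
    then show ?thesis using Cons.IH[of "\<not> b"] False Cons.prems by auto
  qed
qed

lemma tw_enc:
  assumes "\<forall>e\<in>set cs. 1 \<le> e"
  shows "takeWhile (\<lambda>y. y = lt b) (enc b (c # cs)) = replicate c (lt b)"
proof -
  have "takeWhile (\<lambda>y. y = lt b) (enc (\<not> b) cs) = []"
    using assms lt_neq[of b] by (cases cs) (auto simp: Suc_le_eq)
  moreover have "takeWhile (\<lambda>y. y = lt b) (replicate c (lt b) @ enc (\<not> b) cs)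
      = replicate c (lt b) @ takeWhile (\<lambda>y. y = lt b) (enc (\<not> b) cs)"
    by (rule takeWhile_append2) simp
  ultimately show ?thesis by simp
qed

lemma enc_unique:
  "\<forall>e\<in>set cs. 1 \<le> e \<Longrightarrow> \<forall>e\<in>set cs'. 1 \<le> e \<Longrightarrow> enc b cs = enc b cs' \<Longrightarrow> cs = cs'"
proof (induction cs arbitrary: b cs')
  case Nil
  then show ?case by (cases cs') (auto simp: Suc_le_eq)
next
  case (Cons c cs)
  then obtain c' cs'' where cs': "cs' = c' # cs''" by (cases cs') (auto simp: Suc_le_eq)
  have "replicate c (lt b) = replicate c' (lt b)"
    using tw_enc[of cs b c] tw_enc[of cs'' b c'] Cons.prems cs' by simp
  then have cc: "c = c'" by (metis length_replicate)
  then have "enc (\<not> b) cs = enc (\<not> b) cs''" using Cons.prems cs' by simp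
  then have "cs = cs''" using Cons cs' by simp
  then show ?case using cc cs' by simp
qed

lemma enc_exists:
  "V = [] \<or> hd V = lt b \<Longrightarrow> \<exists>es. V = enc b es \<and> (\<forall>e\<in>set es. 1 \<le> e)"
proof (induction "length V" arbitrary: V b rule: less_induct)
  case less
  show ?case
  proof (cases "V = []")
    case True then show ?thesis by (intro exI[of _ "[]"]) simp
  next
    case False
    let ?P = "\<lambda>y. y = lt b"
    define c where "c = length (takeWhile ?P V)"
    define rest where "rest = dropWhile ?P V"
    have tw: "takeWhile ?P V = replicate c (lt b)"
    proof -
      have "\<forall>y\<in>set (takeWhile ?P V). y = lt b" by (auto dest: set_takeWhileD)
      then show ?thesis unfolding c_def by (simp add: replicate_length_same)
    qed
    have V: "V = replicate c (lt b) @ rest" using takeWhile_dropWhile_id[of ?P V] tw rest_def by simp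
    have c1: "1 \<le> c" using False less.prems unfolding c_def
      by (cases V) auto
    have hr: "rest = [] \<or> hd rest = lt (\<not> b)"
    proof (cases "rest = []")
      case False
      then have "hd rest \<noteq> lt b" unfolding rest_def using hd_dropWhile[of ?P V] by simp
      then show ?thesis unfolding lt_def by (cases "hd rest") (auto split: if_splits)
    qed simp
    have "length rest < length V" using V c1 by simp
    then obtain es where es: "rest = enc (\<not> b) es" "\<forall>e\<in>set es. 1 \<le> e"
      using less.hyps hr by blast
    show ?thesis using V es c1 by (intro exI[of _ "c # es"]) simp
  qed
qed



definition per :: "(nat \<Rightarrow> int) \<Rightarrow> nat \<Rightarrow> bool" where
  "per d q \<longleftrightarrow> 0 < q \<and> (\<exists>N. \<forall>k\<ge>N. d (k + q) = d k)"

lemma periodic_mod: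
  fixes f :: "nat \<Rightarrow> 'a" and i E :: nat
  assumes "\<forall>i. f (i + E) = f i" "0 < E"
  shows "f i = f (i mod E)"
proof (induction i rule: less_induct)
  case (less i)
  show ?case
  proof (cases "i < E")
    case True then show ?thesis by simp
  next
    case False
    then have "f i = f ((i - E) + E)" by simp
    also have "\<dots> = f (i - E)" using assms by simp
    also have "\<dots> = f ((i - E) mod E)" using less assms False by simp
    also have "\<dots> = f (i mod E)" using False by (simp add: le_mod_geq)
    finally show ?thesis .
  qed
qed

lemma periodic_mult:
  fixes f :: "nat \<Rightarrow> 'a" and i j p :: nat
  assumes "\<forall>i. f (i + p) = f i"
  shows "f (i + j * p) = f i"
proof (induction j)
  case 0 then show ?case by simp
next
  case (Suc j)
  have "f (i + Suc j * p) = f ((i + j * p) + p)" by (simp add: algebra_simps)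
  then show ?case using assms Suc by simp
qed

lemma sum_list_ge_length: "\<forall>e\<in>set es. (1::nat) \<le> e \<Longrightarrow> length es \<le> sum_list es"
  by (induction es) auto

lemma hd_concat_replicate: "U \<noteq> [] \<Longrightarrow> 1 \<le> k \<Longrightarrow> hd (concat (replicate k U)) = hd U"
  by (cases k) auto

lemma last_concat_replicate: "U \<noteq> [] \<Longrightarrow> 1 \<le> k \<Longrightarrow> last (concat (replicate k U)) = last U"
proof (induction k)
  case 0 then show ?case by simp
next
  case (Suc k)
  then show ?case by (cases k) auto
qed

lemma G1:
  assumes per0: "per d q0"
    and pos: "\<forall>k\<ge>1. 1 \<le> d k"
    and p_def: "p = (LEAST p. per d p)"
    and N0_def: "N0 = (LEAST N. \<forall>k\<ge>N. d (k + p) = d k)"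
    and E0_def: "E0 = (if even N0 then N0 else N0 + 1)"
    and E_def: "E = (if even p then p else 2 * p)"
    and ds_def: "ds = map (\<lambda>i. nat (d (E0 + i))) [0..<E]"
  shows "card (rots (enc True ds)) = length (enc True ds) \<and> 2 \<le> length (enc True ds)"
proof -
  have pp: "per d p" unfolding p_def using per0 by (rule LeastI)
  have pmin: "p \<le> q" if "per d q" for q using that p_def by (simp add: Least_le)
  have p0: "0 < p" using pp per_def by simp
  have N0: "\<forall>k\<ge>N0. d (k + p) = d k"
  proof -
    have "\<exists>N. \<forall>k\<ge>N. d (k + p) = d k" using pp unfolding per_def by simp
    then show ?thesis unfolding N0_def by (rule LeastI_ex)
  qed
  have EN: "N0 \<le> E0" using E0_def by simp
  have perp: "d (E0 + i + p) = d (E0 + i)" for i using N0 EN by simp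
  have perE: "d (E0 + i + E) = d (E0 + i)" for i
  proof (cases "even p")
    case True then show ?thesis using perp E_def by simp
  next
    case False
    have "E0 + i + E = E0 + (i + p) + p" using False E_def by simp
    then have "d (E0 + i + E) = d (E0 + (i + p) + p)" by presburger
    also have "\<dots> = d (E0 + i)" using perp by (metis add.assoc)
    finally show ?thesis .
  qed
  have E0: "0 < E" "even E" using E_def p0 by auto
  have dpos: "1 \<le> d (E0 + i)" for i
  proof (cases "E0 + i \<ge> 1")
    case True then show ?thesis using pos by simp
  next
    case False
    then have "E0 = 0" "i = 0" by auto
    then have "N0 = 0" using EN by simp
    then have "d (0 + p) = d 0" using N0 by blast
    moreover have "1 \<le> d p" using pos p0 by simp
    ultimately show ?thesis using \<open>E0 = 0\<close> \<open>i = 0\<close> by simp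
  qed
  have ds1: "\<forall>e\<in>set ds. 1 \<le> e"
  proof
    fix e assume "e \<in> set ds"
    then obtain i where "e = nat (d (E0 + i))" using ds_def by auto
    then show "1 \<le> e" using dpos[of i] by linarith
  qed
  have lds: "length ds = E" using ds_def by simp
  have len2: "2 \<le> length (enc True ds)"
  proof -
    have "2 \<le> E" using E0 by presburger
    then show ?thesis using sum_list_ge_length[OF ds1] lds length_enc by (metis order_trans)
  qed
  have dsne: "ds \<noteq> []" using lds E0 by auto
  have "card (rots (enc True ds)) = length (enc True ds)"
  proof (rule ccontr)
    assume "card (rots (enc True ds)) \<noteq> length (enc True ds)"
    then have "card (rots (enc True ds)) < length (enc True ds)"
      using card_rots_le le_neq_implies_less by blast
    then obtain U k where Uk: "2 \<le> k" "enc True ds = concat (replicate k U)"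
      using card_rots_power by blast
    have Une: "U \<noteq> []" using Uk len2 by auto
    have hU: "hd U = lt True"
      using hd_enc[OF dsne ds1, of True] Uk Une hd_concat_replicate[OF Une, of k] by simp
    obtain es where es: "U = enc True es" "\<forall>e\<in>set es. 1 \<le> e"
      using enc_exists[of U True] hU by blast
    have esne: "es \<noteq> []" using es Une by auto
    have lU: "last U = lt False"
      using last_enc[OF dsne ds1, of True] E0 lds Uk Une last_concat_replicate[OF Une, of k] by simp
    have eves: "even (length es)"
    proof (rule ccontr)
      assume "odd (length es)"
      then have "last U = lt True" using last_enc[OF esne es(2), of True] es(1) by simp
      then show False using lU by (simp add: lt_def)
    qed
    have "enc True ds = enc True (concat (replicate k es))"
      using Uk es enc_concat_replicate[OF eves] by simp
    moreover have "\<forall>e\<in>set (concat (replicate k es)). 1 \<le> e" using es(2) by auto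
    ultimately have dsc: "ds = concat (replicate k es)" using enc_unique[OF ds1] by blast
    define m where "m = length es"
    have m0: "0 < m" using esne m_def by simp
    have Ekm: "E = k * m" using dsc lds m_def by (simp add: length_concat_replicate)
    have dE: "d (E0 + i) = d (E0 + i mod E)" for i
    proof -
      have hyp: "\<forall>i. d (E0 + (i + E)) = d (E0 + i)" using perE by (simp add: add.assoc)
      show ?thesis using periodic_mod[of "\<lambda>i. d (E0 + i)" E i, OF hyp E0(1)] by simp
    qed
    have dm: "d (E0 + i) = int (es ! (i mod m))" for i
    proof -
      have "i mod E < E" using E0 by simp
      moreover have "0 \<le> d (E0 + i mod E)" using dpos[of "i mod E"] by simp
      ultimately have "d (E0 + i mod E) = int (ds ! (i mod E))" using ds_def by simp
      also have "ds ! (i mod E) = es ! ((i mod E) mod m)"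
        using nth_concat_replicate[of "i mod E" k es] dsc Ekm m_def \<open>i mod E < E\<close> by simp
      also have "(i mod E) mod m = i mod m" using Ekm by (simp add: mod_mod_cancel)
      finally have "d (E0 + i mod E) = int (es ! (i mod m))" .
      then show ?thesis using dE[of i] by simp
    qed
    have "per d m" unfolding per_def
    proof (intro conjI exI[of _ E0] allI impI)
      show "0 < m" by fact
      fix j assume "E0 \<le> j"
      then obtain i where "j = E0 + i" using le_Suc_ex by blast
      then show "d (j + m) = d j" using dm[of i] dm[of "i + m"] by (simp add: add.assoc)
    qed
    then have pm: "p \<le> m" using pmin by simp
    show False
    proof (cases "even p")
      case True
      then have "p = k * m" using E_def Ekm by simp
      moreover have "2 * m \<le> k * m" using Uk by simp
      ultimately show False using pm p0 by linarith
    next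
      case False
      then have "2 * p = k * m" using E_def Ekm by simp
      moreover have "2 * m \<le> k * m" using Uk by simp
      ultimately have "m \<le> p" by linarith
      then have "m = p" using pm by simp
      then show False using False eves m_def by simp
    qed
  qed
  then show ?thesis using len2 by simp
qed

lemma G2:
  assumes es1: "\<forall>e\<in>set es. 1 \<le> e" and eves: "even (length es)" and esne: "es \<noteq> []"
    and crd: "card (rots (enc True es)) = length (enc True es)"
    and dd: "\<forall>k. d k = int (es ! (k mod length es))"
    and p_def: "p = (LEAST p. per d p)"
    and N0_def: "N0 = (LEAST N. \<forall>k\<ge>N. d (k + p) = d k)"
    and E0_def: "E0 = (if even N0 then N0 else N0 + 1)"
    and E_def: "E = (if even p then p else 2 * p)"
    and ds_def: "ds = map (\<lambda>i. nat (d (E0 + i))) [0..<E]"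
  shows "enc True ds = enc True es"
proof -
  define m where "m = length es"
  have m0: "0 < m" using esne m_def by simp
  have dmod: "d (k + j * m) = d k" for k j using dd m_def by simp
  have perm: "per d m" unfolding per_def using m0 dmod[of _ 1] by auto
  have pp: "per d p" unfolding p_def using perm by (rule LeastI)
  have pmin: "p \<le> q" if "per d q" for q using that p_def by (simp add: Least_le)
  have p0: "0 < p" using pp per_def by simp
  have pm: "p \<le> m" using pmin perm by simp
  obtain N where N: "\<forall>k\<ge>N. d (k + p) = d k" using pp per_def by auto
  have pure: "\<forall>k. d (k + p) = d k"
  proof
    fix k
    have "N \<le> N * m" using m0 by simp
    then have "N \<le> k + N * m" by linarith
    then have "d ((k + N * m) + p) = d (k + N * m)" using N by blast
    moreover have "d ((k + N * m) + p) = d (k + p)" using dmod[of "k + p" N] by (simp add: algebra_simps)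
    ultimately show "d (k + p) = d k" using dmod[of k N] by simp
  qed
  have pdvd: "p dvd m"
  proof (rule ccontr)
    assume nd: "\<not> p dvd m"
    define r where "r = m mod p"
    have r0: "0 < r" "r < p" using nd p0 r_def by (auto simp: mod_greater_zero_iff_not_dvd)
    have "d (k + r) = d k" for k
    proof -
      have "d (k + r) = d (k + r + (m div p) * p)" using periodic_mult[OF pure] by simp
      also have "k + r + (m div p) * p = k + m" using r_def by simp
      finally show ?thesis using dmod[of k 1] by simp
    qed
    then have "per d r" unfolding per_def using r0 by auto
    then show False using pmin r0 by fastforce
  qed
  have "N0 = 0" unfolding N0_def using pure by (intro Least_eq_0) simp
  then have E00: "E0 = 0" using E0_def by simp
  have E1: "0 < E" "even E" using E_def p0 by auto
  have Edvd: "E dvd m"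
  proof (cases "even p")
    case True then show ?thesis using pdvd E_def by simp
  next
    case False
    obtain q where q: "m = p * q" using pdvd by (auto elim: dvdE)
    have "even q" using q False eves m_def by simp
    then show ?thesis using q E_def False by (auto elim: evenE)
  qed
  have Em: "E \<le> m" using Edvd m0 by (simp add: dvd_imp_le)
  have pureE: "\<forall>k. d (k + E) = d k"
  proof
    fix k
    show "d (k + E) = d k"
    proof (cases "even p")
      case True then show ?thesis using pure E_def by simp
    next
      case False
      have "k + E = (k + p) + p" using False E_def by simp
      then have "d (k + E) = d ((k + p) + p)" by presburger
      then show ?thesis using pure by simp
    qed
  qed
  have dsE: "ds = take E es"
  proof (rule nth_equalityI)
    show "length ds = length (take E es)" using ds_def Em m_def by simp
    fix i assume "i < length ds"
    then have i: "i < E" using ds_def by simp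
    then have "ds ! i = nat (d i)" using ds_def E00 by simp
    also have "\<dots> = es ! i" using dd i Em m_def by simp
    finally show "ds ! i = take E es ! i" using i by simp
  qed
  show ?thesis
  proof (cases "E = m")
    case True then show ?thesis using dsE m_def by simp
  next
    case False
    then have Elt: "E < m" using Em by simp
    define k where "k = m div E"
    have km: "m = k * E" using Edvd k_def by simp
    have k2: "2 \<le> k"
    proof -
      have "k \<noteq> 0" "k \<noteq> 1" using km Elt m0 by auto
      then show ?thesis by linarith
    qed
    have escr: "es = concat (replicate k (take E es))"
    proof (rule nth_equalityI)
      show "length es = length (concat (replicate k (take E es)))"
        using km Em m_def by (simp add: length_concat_replicate)
      fix i assume i: "i < length es"
      have "int (es ! i) = d i" using dd i by simp
      also have "d i = d (i mod E)" using periodic_mod[of d E i] pureE E1 by simp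
      also have "\<dots> = int (es ! (i mod E))"
      proof -
        have "i mod E < length es" using E1 Em m_def by (meson mod_less_divisor order_less_le_trans)
        then show ?thesis using dd by simp
      qed
      finally have "es ! i = es ! (i mod E)" by simp
      moreover have "concat (replicate k (take E es)) ! i = take E es ! (i mod E)"
        using nth_concat_replicate[of i k "take E es"] i km Em m_def by simp
      ultimately show "es ! i = concat (replicate k (take E es)) ! i" using E1 by simp
    qed
    have evt: "even (length (take E es))" using Em E1 m_def by simp
    have "enc True es = concat (replicate k (enc True (take E es)))"
      using enc_concat_replicate[OF evt, of True k] escr by simp
    moreover have ne: "enc True (take E es) \<noteq> []"
    proof -
      have "take E es \<noteq> []" using E1 esne by simp
      then have "1 \<le> length (take E es)" by (simp add: Suc_le_eq)
      moreover have "\<forall>e\<in>set (take E es). 1 \<le> e" using es1 by (auto dest: in_set_takeD)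
      ultimately have "1 \<le> sum_list (take E es)"
        using sum_list_ge_length[of "take E es"] by linarith
      then show ?thesis using length_enc[of True "take E es"] by (metis le_zero_eq list.size(3) one_neq_zero)
    qed
    ultimately have "card (rots (enc True es)) < length (enc True es)"
      using power_rotate_fix[OF _ k2 ne] by blast
    then show ?thesis using crd by simp
  qed
qed



fun vcf :: "nat list \<Rightarrow> real \<Rightarrow> real" where
  "vcf [] x = x"
| "vcf (c # cs) x = real c + 1 / vcf cs x"

fun mat :: "nat list \<Rightarrow> int \<times> int \<times> int \<times> int" where
  "mat [] = (1, 0, 0, 1)"
| "mat (c # cs) = (case mat cs of (A, B, C, D) \<Rightarrow> (int c * A + C, int c * B + D, A, B))"

lemma mat_props:
  "\<forall>e\<in>set cs. 1 \<le> e \<Longrightarrow> mat cs = (A, B, C, D) \<Longrightarrow>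
    0 \<le> A \<and> 0 \<le> B \<and> 0 \<le> C \<and> 0 \<le> D \<and> A * D - B * C = (-1) ^ length cs \<and>
    (cs \<noteq> [] \<longrightarrow> 1 \<le> A \<and> 1 \<le> B \<and> 1 \<le> C) \<and> (2 \<le> length cs \<longrightarrow> 2 \<le> A \<and> 1 \<le> D)"
proof (induction cs arbitrary: A B C D)
  case Nil then show ?case by simp
next
  case (Cons c cs)
  obtain A' B' C' D' where m: "mat cs = (A', B', C', D')" by (cases "mat cs") auto
  have IH: "0 \<le> A' \<and> 0 \<le> B' \<and> 0 \<le> C' \<and> 0 \<le> D' \<and> A' * D' - B' * C' = (-1) ^ length cs \<and>
    (cs \<noteq> [] \<longrightarrow> 1 \<le> A' \<and> 1 \<le> B' \<and> 1 \<le> C') \<and> (2 \<le> length cs \<longrightarrow> 2 \<le> A' \<and> 1 \<le> D')"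
    using Cons.IH[OF _ m] Cons.prems by simp
  have eq: "A = int c * A' + C'" "B = int c * B' + D'" "C = A'" "D = B'"
    using Cons.prems m by auto
  have c1: "1 \<le> c" using Cons.prems by simp
  have det: "A * D - B * C = - (A' * D' - B' * C')" unfolding eq by (simp add: algebra_simps)
  show ?case
  proof (cases "cs = []")
    case True
    then have "A' = 1" "B' = 0" "C' = 0" "D' = 1" using m by auto
    then show ?thesis using eq c1 True by simp
  next
    case False
    then have h: "1 \<le> A'" "1 \<le> B'" "1 \<le> C'" using IH by auto
    have m1: "int c * A' \<ge> 1 * A'" using c1 IH by (intro mult_right_mono) auto
    have m2: "int c * B' \<ge> 1 * B'" using c1 IH by (intro mult_right_mono) auto
    have "1 \<le> A" "1 \<le> B" "1 \<le> C" "2 \<le> A" "1 \<le> D" "0 \<le> A" "0 \<le> B" "0 \<le> C" "0 \<le> D"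
      using eq h m1 m2 IH by linarith+
    then show ?thesis using det IH by simp
  qed
qed

lemma vcf_pos: "0 < x \<Longrightarrow> 0 < vcf cs x"
  by (induction cs) (auto intro: add_nonneg_pos)

lemma vcf_gt1: "0 < x \<Longrightarrow> cs \<noteq> [] \<Longrightarrow> \<forall>e\<in>set cs. 1 \<le> e \<Longrightarrow> 1 < vcf cs x"
proof (cases cs)
  case (Cons c cs')
  assume "0 < x" "\<forall>e\<in>set cs. 1 \<le> e"
  then have "0 < vcf cs' x" "1 \<le> c" using vcf_pos Cons by auto
  moreover have "0 < 1 / vcf cs' x" using \<open>0 < vcf cs' x\<close> by simp
  moreover have "1 \<le> real c" using \<open>1 \<le> c\<close> by simp
  ultimately have "1 < real c + 1 / vcf cs' x" by linarith
  then show ?thesis using Cons by simp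
qed simp

lemma vcf_mat:
  "0 < x \<Longrightarrow> mat cs = (A, B, C, D) \<Longrightarrow>
     0 < C * x + D \<and> vcf cs x = (A * x + B) / (C * x + D)"
proof (induction cs arbitrary: A B C D)
  case Nil then show ?case by simp
next
  case (Cons c cs)
  obtain A' B' C' D' where m: "mat cs = (A', B', C', D')" by (cases "mat cs") auto
  have IH: "0 < C' * x + D'" "vcf cs x = (A' * x + B') / (C' * x + D')"
    using Cons.IH[OF Cons.prems(1) m] by auto
  have eq: "A = int c * A' + C'" "B = int c * B' + D'" "C = A'" "D = B'"
    using Cons.prems m by auto
  have v: "0 < vcf cs x" using vcf_pos Cons.prems by simp
  have pos: "0 < A' * x + B'" using v IH by (simp add: zero_less_divide_iff)
  show ?case
  proof
    show "0 < real_of_int C * x + real_of_int D" using pos eq by simp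
    have inv: "1 / vcf cs x = (C' * x + D') / (A' * x + B')" using IH(2) by simp
    have "vcf (c # cs) x = real c + (C' * x + D') / (A' * x + B')" using inv by simp
    also have "\<dots> = ((int c * A' + C') * x + (int c * B' + D')) / (A' * x + B')"
      using pos by (simp add: field_simps)
    finally show "vcf (c # cs) x = (real_of_int A * x + real_of_int B) / (real_of_int C * x + real_of_int D)"
      unfolding eq by simp
  qed
qed

lemma cf_rem_vcf:
  assumes es1: "\<forall>e\<in>set es. 1 \<le> e" and esne: "es \<noteq> []" and x0: "0 < x"
    and fx: "vcf es x = x"
  shows "cf_rem x k = vcf (drop (k mod length es) es) x"
proof (induction k)
  case 0 then show ?case using fx by simp
next
  case (Suc k)
  define j where "j = k mod length es"
  have j: "j < length es" using esne j_def by simp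
  have dr: "drop j es = es ! j # drop (Suc j) es" using j by (simp add: Cons_nth_drop_Suc)
  define v' where "v' = vcf (drop (Suc j) es) x"
  have v'1: "1 < v'"
  proof (cases "Suc j = length es")
    case True
    then have "v' = x" using v'_def by simp
    then show ?thesis using vcf_gt1[OF x0 esne es1] fx by simp
  next
    case False
    then have "drop (Suc j) es \<noteq> []" using j by simp
    moreover have "\<forall>e\<in>set (drop (Suc j) es). 1 \<le> e" using es1 by (auto dest: in_set_dropD)
    ultimately show ?thesis using vcf_gt1[OF x0] v'_def by simp
  qed
  have cr: "cf_rem x k = real (es ! j) + 1 / v'" using Suc j_def dr v'_def by simp
  have fl: "\<lfloor>cf_rem x k\<rfloor> = int (es ! j)"
  proof -
    have "0 < 1 / v'" "1 / v' < 1" using v'1 by auto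
    then show ?thesis using cr by (simp add: floor_eq_iff)
  qed
  have "cf_rem x (Suc k) = v'" using cr fl by simp
  moreover have "vcf (drop (Suc k mod length es) es) x = v'"
  proof (cases "Suc j = length es")
    case True
    then have "Suc k mod length es = 0" using j_def by (metis mod_Suc)
    then show ?thesis using True fx v'_def by simp
  next
    case False
    then have "Suc k mod length es = Suc j" using j_def by (metis mod_Suc)
    then show ?thesis using v'_def by simp
  qed
  ultimately show ?case by simp
qed

lemma construct_Q:
  assumes es1: "\<forall>e\<in>set es. 1 \<le> e" and eves: "even (length es)" and esne: "es \<noteq> []"
  shows "\<exists>Q\<in>Qplus. \<forall>k. cf_digit (wQ Q) k = int (es ! (k mod length es))"
proof -
  obtain A B C D where m: "mat es = (A, B, C, D)" by (cases "mat es") auto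
  have "length es \<noteq> 0" using esne by simp
  then have l2: "2 \<le> length es" using eves by presburger
  have P: "0 \<le> A" "0 \<le> B" "0 \<le> C" "0 \<le> D" "A * D - B * C = 1" "1 \<le> B" "1 \<le> C" "2 \<le> A" "1 \<le> D"
    using mat_props[OF es1 m] eves esne l2 by auto
  define t where "t = A + D"
  have t3: "3 \<le> t" using P t_def by simp
  define Q where "Q = (C, D - A, - B)"
  have dQ: "disc Q = (D - A)^2 + 4 * B * C" unfolding disc_def Q_def by (simp add: algebra_simps)
  have dQt: "disc Q = t^2 - 4" using dQ P(5) unfolding t_def by (simp add: power2_eq_square algebra_simps)
  have QP: "Q \<in> Qplus"
    unfolding Qplus_def
  proof (intro CollectI conjI notI)
    have "3 * 3 \<le> t * t" using t3 by (intro mult_mono) auto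
    then show "0 < disc Q" using dQt by (simp add: power2_eq_square)
    assume "\<exists>k. disc Q = k^2"
    then obtain k where k: "t^2 - 4 = k^2" using dQt by auto
    have k2: "\<bar>k\<bar>^2 = k^2" by simp
    have kt: "\<bar>k\<bar>^2 < t^2" using k k2 by linarith
    have t0: "0 \<le> t" using t3 by simp
    have a1: "\<bar>k\<bar> < t" by (rule power_less_imp_less_base[OF kt t0])
    have "(t - 1)^2 = t^2 - 2 * t + 1" by (simp add: power2_eq_square algebra_simps)
    then have kt2: "(t - 1)^2 < \<bar>k\<bar>^2" using k k2 t3 by linarith
    have a2: "t - 1 < \<bar>k\<bar>" by (rule power_less_imp_less_base[OF kt2 abs_ge_zero])
    show False using a1 a2 by linarith
  qed
  define s where "s = sqrt (real_of_int (disc Q))"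
  have s2: "s^2 = real_of_int ((D - A)^2 + 4 * B * C)"
  proof -
    have dpos: "0 < disc Q" using QP unfolding Qplus_def by simp
    have "s^2 = real_of_int (disc Q)" unfolding s_def using dpos by simp
    then show ?thesis using dQ by simp
  qed
  have sgt: "\<bar>real_of_int (A - D)\<bar> < s"
  proof -
    have "0 < B * C" using P by simp
    then have "(A - D)^2 < disc Q" using dQ by (simp add: power2_commute)
    then have "real_of_int ((A - D)^2) < real_of_int (disc Q)" by (simp only: of_int_less_iff)
    then have "sqrt (real_of_int ((A - D)^2)) < s" unfolding s_def by (rule real_sqrt_less_mono)
    then show ?thesis by simp
  qed
  define x where "x = (real_of_int (A - D) + s) / (2 * real_of_int C)"
  have wx: "wQ Q = x" unfolding wQ_def Q_def x_def s_def by (simp add: algebra_simps)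
  have x0: "0 < x" using sgt P unfolding x_def by (intro divide_pos_pos) auto
  have quad: "real_of_int C * x^2 + real_of_int (D - A) * x - real_of_int B = 0"
  proof -
    have C0: "real_of_int C \<noteq> 0" using P by simp
    have "4 * real_of_int C * (real_of_int C * x^2 + real_of_int (D - A) * x - real_of_int B)
        = s^2 - real_of_int (A - D)^2 - 4 * real_of_int B * real_of_int C"
      unfolding x_def using C0 by (simp add: field_simps power2_eq_square)
    also have "\<dots> = 0" using s2 by (simp add: power2_eq_square algebra_simps)
    finally show ?thesis using C0 by simp
  qed
  have fx: "vcf es x = x"
  proof -
    have "0 < real_of_int C * x + real_of_int D" "vcf es x = (real_of_int A * x + real_of_int B) / (real_of_int C * x + real_of_int D)"
      using vcf_mat[OF x0 m] by auto
    moreover have "real_of_int A * x + real_of_int B = x * (real_of_int C * x + real_of_int D)"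
      using quad by (simp add: power2_eq_square algebra_simps)
    ultimately show ?thesis by simp
  qed
  have "cf_digit (wQ Q) k = int (es ! (k mod length es))" for k
  proof -
    define j where "j = k mod length es"
    have j: "j < length es" using esne j_def by simp
    have dr: "drop j es = es ! j # drop (Suc j) es" using j by (simp add: Cons_nth_drop_Suc)
    define v' where "v' = vcf (drop (Suc j) es) x"
    have v'1: "1 < v'"
    proof (cases "Suc j = length es")
      case True
      then have "v' = x" using v'_def by simp
      then show ?thesis using vcf_gt1[OF x0 esne es1] fx by simp
    next
      case False
      then have "drop (Suc j) es \<noteq> []" using j by simp
      moreover have "\<forall>e\<in>set (drop (Suc j) es). 1 \<le> e" using es1 by (auto dest: in_set_dropD)
      ultimately show ?thesis using vcf_gt1[OF x0] v'_def by simp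
    qed
    have cr: "cf_rem x k = real (es ! j) + 1 / v'"
      using cf_rem_vcf[OF es1 esne x0 fx, of k] j_def dr v'_def by simp
    have "0 < 1 / v'" "1 / v' < 1" using v'1 by auto
    then show ?thesis using cr wx unfolding cf_digit_def j_def by (simp add: floor_eq_iff)
  qed
  then show ?thesis using QP by blast
qed



lemma inv_lt_neg1: "(z::real) < -1 \<Longrightarrow> -1 < 1 / z \<and> 1 / z < 0"
  by (auto simp: field_simps)

lemma abstract_bound:
  fixes X Y :: "nat \<Rightarrow> real" and PP QQ :: "nat \<Rightarrow> int" and s :: real
  assumes s0: "0 < s"
    and QQ0: "\<And>k. QQ k \<noteq> 0"
    and Xd: "\<And>k. X k = (PP k + s) / QQ k"
    and Yd: "\<And>k. Y k = (PP k - s) / QQ k"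
    and Xs: "\<And>k. X (Suc k) = 1 / (X k - \<lfloor>X k\<rfloor>)"
    and Ys: "\<And>k. Y (Suc k) = 1 / (Y k - \<lfloor>X k\<rfloor>)"
    and Xn: "\<And>k. X k \<notin> \<int>"
    and Yn: "\<And>k. Y k \<notin> \<int>"
  shows "\<exists>K. \<forall>k\<ge>K. 0 < PP k \<and> PP k < s \<and> 0 < QQ k \<and> QQ k < 2 * s"
proof -
  define a where "a k = \<lfloor>X k\<rfloor>" for k
  have fr: "0 < X k - a k" "X k - a k < 1" for k
  proof -
    have "X k - a k = frac (X k)" unfolding a_def frac_def by simp
    then show "0 < X k - a k" "X k - a k < 1" using Xn[of k] frac_lt_1[of "X k"] by auto
  qed
  have X1: "1 < X (Suc k)" for k
    using Xs[of k] fr[of k] unfolding a_def by (simp add: less_divide_eq)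
  have a1: "1 \<le> a (Suc k)" for k using X1[of k] unfolding a_def by linarith
  have XY: "X k - Y k = 2 * s / QQ k" for k
    using Xd[of k] Yd[of k] QQ0[of k] by (simp add: field_simps)
  have Ys': "Y (Suc k) = 1 / (Y k - a k)" for k using Ys a_def by simp
  have yne: "Y k \<noteq> of_int m" for k m using Yn[of k] by auto
  have exK: "\<exists>K. Y (Suc K) < 0"
  proof (rule ccontr)
    assume "\<not> (\<exists>K. Y (Suc K) < 0)"
    then have H: "0 \<le> Y (Suc k)" for k by (simp add: not_less)
    have mid: "a (Suc k) < Y (Suc k) \<and> Y (Suc k) < a (Suc k) + 1" for k
    proof -
      have c1: "\<not> Y (Suc k) < a (Suc k)"
      proof
        assume "Y (Suc k) < a (Suc k)"
        then have "Y (Suc (Suc k)) < 0" using Ys'[of "Suc k"] by (simp add: divide_less_0_iff)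
        then show False using H[of "Suc k"] by simp
      qed
      have c2: "\<not> Y (Suc k) > a (Suc k) + 1"
      proof
        assume "Y (Suc k) > a (Suc k) + 1"
        then have "0 < Y (Suc (Suc k))" "Y (Suc (Suc k)) < 1" using Ys'[of "Suc k"]
          by (auto simp: divide_less_eq)
        then have "Y (Suc (Suc k)) - a (Suc (Suc k)) < 0" using a1[of "Suc k"] by linarith
        then have "Y (Suc (Suc (Suc k))) < 0" using Ys'[of "Suc (Suc k)"] by (simp add: divide_less_0_iff)
        then show False using H[of "Suc (Suc k)"] by simp
      qed
      have "Y (Suc k) \<noteq> of_int (a (Suc k))" using yne by auto
      moreover have "Y (Suc k) \<noteq> of_int (a (Suc k) + 1)" using yne[of "Suc k" "a (Suc k) + 1"] by simp
      ultimately have "Y (Suc k) \<noteq> of_int (a (Suc k))" "Y (Suc k) \<noteq> of_int (a (Suc k)) + 1" by simp_all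
      then show ?thesis using c1 c2 by auto
    qed
    have dec: "\<bar>QQ (Suc (Suc k))\<bar> < \<bar>QQ (Suc k)\<bar>" for k
    proof -
      define u where "u = X (Suc k) - a (Suc k)"
      define v where "v = Y (Suc k) - a (Suc k)"
      have uv: "0 < u" "u < 1" "0 < v" "v < 1" using fr[of "Suc k"] mid[of k] u_def v_def by auto
      have d1: "X (Suc k) - Y (Suc k) = u - v" using u_def v_def by simp
      have d2: "X (Suc (Suc k)) - Y (Suc (Suc k)) = (v - u) / (u * v)"
      proof -
        have "X (Suc (Suc k)) = 1 / u" "Y (Suc (Suc k)) = 1 / v"
          using Xs[of "Suc k"] Ys'[of "Suc k"] unfolding u_def v_def a_def by simp_all
        then show ?thesis using uv by (simp add: field_simps)
      qed
      have uvne: "u - v \<noteq> 0" using d1 XY[of "Suc k"] s0 QQ0[of "Suc k"] by auto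
      have "u * v < 1 * 1" using uv by (intro mult_strict_mono) auto
      then have uv1: "u * v < 1" by simp
      have uvp: "0 < u * v" using uv by simp
      have "\<bar>u - v\<bar> < \<bar>v - u\<bar> / (u * v)"
      proof -
        have "\<bar>u - v\<bar> * (u * v) < \<bar>u - v\<bar> * 1" using uvne uv1 uvp by (intro mult_strict_left_mono) auto
        then show ?thesis using uvp by (simp add: less_divide_eq abs_minus_commute)
      qed
      then have "\<bar>2 * s / QQ (Suc k)\<bar> < \<bar>2 * s / QQ (Suc (Suc k))\<bar>"
        using d1 d2 XY[of "Suc k"] XY[of "Suc (Suc k)"] uvp by (simp add: abs_divide)
      then have "2 * s / \<bar>QQ (Suc k)\<bar> < 2 * s / \<bar>QQ (Suc (Suc k))\<bar>"
        using s0 by (simp add: abs_divide)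
      moreover have "0 < \<bar>real_of_int (QQ (Suc (Suc k)))\<bar>" "0 < \<bar>real_of_int (QQ (Suc k))\<bar>" using QQ0 by auto
      ultimately have "real_of_int \<bar>QQ (Suc (Suc k))\<bar> < real_of_int \<bar>QQ (Suc k)\<bar>"
        using s0 by (simp add: divide_less_eq field_simps)
      then show ?thesis by linarith
    qed
    have "\<bar>QQ (Suc j)\<bar> + int j \<le> \<bar>QQ 1\<bar>" for j
    proof (induction j)
      case 0 then show ?case by simp
    next
      case (Suc j) then show ?case using dec[of j] by simp
    qed
    from this[of "nat \<bar>QQ 1\<bar>"] show False using QQ0[of "Suc (nat \<bar>QQ 1\<bar>)"] by simp
  qed
  then obtain K where K: "Y (Suc K) < 0" by blast
  have Yb: "-1 < Y (Suc (Suc K) + j) \<and> Y (Suc (Suc K) + j) < 0" for j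
  proof (induction j)
    case 0
    have "Y (Suc K) - a (Suc K) < -1" using K a1[of K] by linarith
    then show ?case using Ys'[of "Suc K"] inv_lt_neg1 by simp
  next
    case (Suc j)
    have "Y (Suc (Suc K) + j) - a (Suc (Suc K) + j) < -1" using Suc a1[of "Suc K + j"] by simp
    then show ?case using Ys'[of "Suc (Suc K) + j"] inv_lt_neg1 by simp
  qed
  have "0 < PP k \<and> PP k < s \<and> 0 < QQ k \<and> QQ k < 2 * s" if k: "Suc (Suc K) \<le> k" for k
  proof -
    obtain j where j: "k = Suc (Suc K) + j" using k le_Suc_ex by blast
    have y: "-1 < Y k" "Y k < 0" using Yb[of j] j by auto
    have x: "1 < X k" using X1[of "Suc K + j"] j by simp
    have q: "0 < QQ k"
    proof -
      have "0 < 2 * s / QQ k" using XY[of k] x y by simp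
      then show ?thesis using s0 by (simp add: zero_less_divide_iff)
    qed
    have qr: "0 < real_of_int (QQ k)" using q by simp
    have "X k + Y k = 2 * PP k / QQ k" using Xd[of k] Yd[of k] by (simp add: add_divide_distrib[symmetric])
    then have "0 < 2 * PP k / QQ k" using x y by simp
    then have p: "0 < PP k" using qr by (simp add: zero_less_divide_iff)
    have "(PP k - s) / QQ k < 0" using y Yd[of k] by simp
    then have ps: "PP k < s" using qr by (simp add: divide_less_0_iff)
    have "1 < 2 * s / QQ k" using XY[of k] x y by simp
    then have "QQ k < 2 * s" using qr by (simp add: less_divide_eq)
    then show ?thesis using p ps q by simp
  qed
  then show ?thesis by blast
qed

fun pqs :: "real \<Rightarrow> int \<Rightarrow> int \<Rightarrow> int \<Rightarrow> nat \<Rightarrow> int \<times> int" where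
  "pqs w D P0 Q0 0 = (P0, Q0)"
| "pqs w D P0 Q0 (Suc k) = (case pqs w D P0 Q0 k of (P, Qk) \<Rightarrow>
      (cf_digit w k * Qk - P, (D - (cf_digit w k * Qk - P)^2) div Qk))"

lemma step:
  fixes P Qk a P' Q' D :: int and s :: real
  assumes s2: "s^2 = real_of_int D" and sn: "\<forall>m. s \<noteq> of_int m"
    and Q0: "Qk \<noteq> 0" and dv: "Qk dvd D - P^2"
    and P'd: "P' = a * Qk - P" and Q'd: "Q' = (D - P'^2) div Qk"
  shows "Q' \<noteq> 0 \<and> Q' dvd D - P'^2 \<and> 1 / ((P + s) / Qk - a) = (P' + s) / Q'
         \<and> 1 / ((P - s) / Qk - a) = (P' - s) / Q'"
proof -
  have e: "D - P'^2 = (D - P^2) + Qk * (2 * a * P - a^2 * Qk)"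
    unfolding P'd by (simp add: power2_eq_square algebra_simps)
  have dv': "Qk dvd D - P'^2" unfolding e using dv by (intro dvd_add) simp_all
  have QQ: "Qk * Q' = D - P'^2" using dv' Q'd by simp
  have Q'0: "Q' \<noteq> 0"
  proof
    assume "Q' = 0"
    then have "D = P'^2" using QQ by simp
    then have "s^2 = (real_of_int P')^2" using s2 by simp
    then have "\<bar>s\<bar> = \<bar>real_of_int P'\<bar>" using power2_eq_iff_nonneg
      by (metis abs_ge_zero power2_abs)
    then have "s = of_int P' \<or> s = of_int (- P')" by (auto simp: abs_if split: if_splits)
    then show False using sn by blast
  qed
  have QQr: "real_of_int Qk * real_of_int Q' = (s - P') * (s + P')"
  proof -
    have "real_of_int Qk * real_of_int Q' = real_of_int D - (real_of_int P')^2"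
      using arg_cong[OF QQ, of real_of_int] by simp
    also have "\<dots> = (s - P') * (s + P')" using s2 by (simp add: power2_eq_square algebra_simps)
    finally show ?thesis .
  qed
  have sm: "s - P' \<noteq> 0" using sn by (metis eq_iff_diff_eq_0)
  have sp: "s + P' \<noteq> 0"
  proof
    assume "s + P' = 0"
    then have "s = of_int (- P')" by simp
    then show False using sn by blast
  qed
  have Qkr: "real_of_int Qk \<noteq> 0" using Q0 by simp
  have Q'r: "real_of_int Q' \<noteq> 0" using Q'0 by simp
  have e1: "(P + s) / Qk - a = (s - P') / Qk" using Qkr unfolding P'd by (simp add: field_simps)
  have e2: "(P - s) / Qk - a = - (s + P') / Qk" using Qkr unfolding P'd by (simp add: field_simps)
  have r1: "1 / ((P + s) / Qk - a) = (P' + s) / Q'"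
    unfolding e1 using QQr sm Qkr Q'r by (simp add: field_simps)
  have r2: "1 / ((P - s) / Qk - a) = (P' - s) / Q'"
    unfolding e2 using QQr sp Qkr Q'r by (simp add: field_simps)
  show ?thesis using Q'0 QQ r1 r2 by (metis dvd_triv_right)
qed

lemma lagrange:
  assumes QP: "Q \<in> Qplus"
  shows "(\<exists>q. per (cf_digit (wQ Q)) q) \<and> (\<forall>k\<ge>1. 1 \<le> cf_digit (wQ Q) k)"
proof -
  obtain a b c where Qd: "Q = (a, b, c)" by (cases Q) auto
  define D where "D = disc Q"
  have D0: "0 < D" and Dns: "\<forall>k. D \<noteq> k^2" using QP unfolding Qplus_def D_def by auto
  have Db: "D = b^2 - 4 * a * c" using Qd D_def disc_def by simp
  have a0: "a \<noteq> 0" using Db Dns by auto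
  define s where "s = sqrt (real_of_int D)"
  have s2: "s^2 = real_of_int D" unfolding s_def using D0 by simp
  have s0: "0 < s" unfolding s_def using D0 by simp
  have sn: "\<forall>m. s \<noteq> of_int m"
  proof (intro allI notI)
    fix m assume "s = of_int m"
    then have "real_of_int D = real_of_int (m^2)" using s2 by simp
    then show False using Dns of_int_eq_iff by blast
  qed
  define w where "w = wQ Q"
  have w: "w = (real_of_int (- b) + s) / real_of_int (2 * a)"
    unfolding w_def wQ_def s_def D_def Qd by simp
  define PP where "PP k = fst (pqs w D (- b) (2 * a) k)" for k
  define QQ where "QQ k = snd (pqs w D (- b) (2 * a) k)" for k
  have ps: "PP (Suc k) = cf_digit w k * QQ k - PP k \<and> QQ (Suc k) = (D - PP (Suc k)^2) div QQ k" for k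
    unfolding PP_def QQ_def by (cases "pqs w D (- b) (2 * a) k") auto
  have inv: "QQ k \<noteq> 0 \<and> QQ k dvd D - (PP k)^2 \<and> cf_rem w k = (PP k + s) / QQ k" for k
  proof (induction k)
    case 0
    have "D - b^2 = 2 * a * (- 2 * c)" using Db by simp
    then show ?case using a0 w unfolding PP_def QQ_def by simp
  next
    case (Suc k)
    have st: "QQ (Suc k) \<noteq> 0 \<and> QQ (Suc k) dvd D - (PP (Suc k))^2
        \<and> 1 / ((PP k + s) / QQ k - cf_digit w k) = (PP (Suc k) + s) / QQ (Suc k)
        \<and> 1 / ((PP k - s) / QQ k - cf_digit w k) = (PP (Suc k) - s) / QQ (Suc k)"
      using Suc ps[of k] by (intro step[OF s2 sn]) auto
    then show ?case using Suc by (simp add: cf_digit_def)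
  qed
  define X where "X k = cf_rem w k" for k
  define Y where "Y k = (PP k - s) / QQ k" for k
  have Ys: "Y (Suc k) = 1 / (Y k - \<lfloor>X k\<rfloor>)" for k
  proof -
    have "1 / ((PP k - s) / QQ k - cf_digit w k) = (PP (Suc k) - s) / QQ (Suc k)"
      using inv[of k] ps[of k] by (intro step[OF s2 sn, THEN conjunct2, THEN conjunct2, THEN conjunct2]) auto
    then show ?thesis unfolding Y_def X_def cf_digit_def by simp
  qed
  have notint: "(real_of_int P + t * s) / real_of_int q \<notin> \<int>" if "q \<noteq> 0" "t = 1 \<or> t = -1" for P q t
  proof
    assume "(real_of_int P + t * s) / real_of_int q \<in> \<int>"
    then obtain z where z: "(real_of_int P + t * s) / real_of_int q = of_int z" by (auto elim: Ints_cases)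
    then have "real_of_int P + t * s = of_int z * of_int q" using that by (simp add: field_simps)
    then have "t * s = of_int (z * q - P)" by simp
    then have "s = of_int (z * q - P) \<or> s = of_int (- (z * q - P))" using that by auto
    then show False using sn by blast
  qed
  have bnd: "\<exists>K. \<forall>k\<ge>K. 0 < PP k \<and> PP k < s \<and> 0 < QQ k \<and> QQ k < 2 * s"
  proof (rule abstract_bound[of s QQ X PP Y])
    show "0 < s" by fact
    show "QQ k \<noteq> 0" for k using inv by simp
    show "X k = (PP k + s) / QQ k" for k using inv X_def by simp
    show "Y k = (PP k - s) / QQ k" for k using Y_def by simp
    show "X (Suc k) = 1 / (X k - \<lfloor>X k\<rfloor>)" for k using X_def by simp
    show "Y (Suc k) = 1 / (Y k - \<lfloor>X k\<rfloor>)" for k by (rule Ys)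
    show "X k \<notin> \<int>" for k using notint[of "QQ k" 1 "PP k"] inv[of k] X_def by simp
    show "Y k \<notin> \<int>" for k using notint[of "QQ k" "-1" "PP k"] inv[of k] Y_def by simp
  qed
  then obtain K where K: "\<forall>k\<ge>K. 0 < PP k \<and> PP k < s \<and> 0 < QQ k \<and> QQ k < 2 * s" by blast
  have sD: "s \<le> real_of_int D"
  proof -
    have "1 \<le> s" unfolding s_def using D0 by simp
    then have "s * 1 \<le> s * s" using s0 by (intro mult_left_mono) auto
    then show ?thesis using s2 by (simp add: power2_eq_square)
  qed
  define S where "S = {0..D} \<times> {0..2 * D}"
  define f where "f k = (PP k, QQ k)" for k
  have finS: "finite S" unfolding S_def by simp
  have fS: "f ` {K..K + card S} \<subseteq> S"
  proof
    fix y assume "y \<in> f ` {K..K + card S}"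
    then obtain k where k: "K \<le> k" "y = f k" by auto
    then have "real_of_int (PP k) < real_of_int D" "real_of_int (QQ k) < real_of_int (2 * D)"
      using K sD by force+
    then have "PP k < D" "QQ k < 2 * D" by (simp_all only: of_int_less_iff)
    then show "y \<in> S" using K k unfolding S_def f_def by auto
  qed
  have "\<not> inj_on f {K..K + card S}"
  proof
    assume "inj_on f {K..K + card S}"
    then have "card {K..K + card S} \<le> card S" using card_inj_on_le fS finS by blast
    then show False by simp
  qed
  then obtain m n where mn: "m \<in> {K..K + card S}" "n \<in> {K..K + card S}" "m \<noteq> n" "f m = f n"
    unfolding inj_on_def by blast
  then obtain m n where mn: "m < n" "f m = f n"
    by (metis linorder_neqE_nat)
  have Xmn: "X m = X n" using mn inv unfolding f_def X_def by simp
  have Xmnj: "X (m + j) = X (n + j)" for j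
  proof (induction j)
    case 0 then show ?case using Xmn by simp
  next
    case (Suc j) then show ?case unfolding X_def by simp
  qed
  have "per (cf_digit w) (n - m)" unfolding per_def
  proof (intro conjI exI[of _ m] allI impI)
    show "0 < n - m" using mn by simp
    fix k assume "m \<le> k"
    then obtain j where j: "k = m + j" using le_Suc_ex by blast
    have "k + (n - m) = n + j" using j mn by simp
    then show "cf_digit w (k + (n - m)) = cf_digit w k" using Xmnj[of j] j unfolding cf_digit_def X_def by (simp add: add.commute)
  qed
  moreover have "\<forall>k\<ge>1. 1 \<le> cf_digit w k"
  proof (intro allI impI)
    fix k :: nat assume "1 \<le> k"
    then obtain j where j: "k = Suc j" by (cases k) auto
    have "X j \<notin> \<int>" using notint[of "QQ j" 1 "PP j"] inv[of j] X_def by simp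
    then have fr: "0 < X j - \<lfloor>X j\<rfloor>" "X j - \<lfloor>X j\<rfloor> < 1"
      using frac_lt_1[of "X j"] frac_gt_0_iff[of "X j"] unfolding frac_def by auto
    have "1 < cf_rem w k" using fr j unfolding X_def by (simp add: less_divide_eq)
    then show "1 \<le> cf_digit w k" unfolding cf_digit_def by linarith
  qed
  ultimately show ?thesis using w_def by blast
qed



lemma word_braid_rots:
  assumes "rots W1 = rots W2" "length W1 = length W2"
  shows "word_braid W1 = word_braid W2"
proof -
  have rk: "rk W1 = rk W2" unfolding rk_def using assms by (intro ext) simp
  have ra: "rot_at W1 = rot_at W2" unfolding rot_at_def using assms rk by (intro ext) simp
  show ?thesis unfolding word_braid_def using assms rk ra by simp
qed

lemma WQ_enc:
  "WQ Q = enc True (map (\<lambda>i. nat (cf_digit (wQ Q) (cf_even_preperiod (wQ Q) + i))) [0..<cf_even_period (wQ Q)])"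
  unfolding WQ_def Let_def by (rule enc_concat_map)

lemma cf_period_per: "cf_period w = (LEAST p. per (cf_digit w) p)"
  unfolding cf_period_def per_def ..

lemma part1:
  assumes QP: "Q \<in> Qplus"
  shows "card (rots (WQ Q)) = length (WQ Q) \<and> 2 \<le> length (WQ Q)"
proof -
  define w where "w = wQ Q"
  obtain q0 where q0: "per (cf_digit w) q0" using lagrange[OF QP] w_def by blast
  have pos: "\<forall>k\<ge>1. 1 \<le> cf_digit w k" using lagrange[OF QP] w_def by blast
  show ?thesis
    unfolding WQ_enc w_def[symmetric]
    by (rule G1[OF q0 pos cf_period_per cf_preperiod_def[unfolded cf_period_per[symmetric]]
          cf_even_preperiod_def cf_even_period_def refl])
qed

lemma find_RL:
  assumes "L \<in> set W" "R \<in> set W"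
  shows "\<exists>i<length W. W ! i = R \<and> W ! (Suc i mod length W) = L"
proof (rule ccontr)
  let ?n = "length W"
  assume "\<not> ?thesis"
  then have H: "\<forall>i<?n. W ! i = R \<longrightarrow> W ! (Suc i mod ?n) = R"
    by (metis letter.exhaust)
  obtain i0 where i0: "i0 < ?n" "W ! i0 = R" using assms(2) by (metis in_set_conv_nth)
  have n0: "0 < ?n" using i0 by linarith
  have all: "W ! ((i0 + m) mod ?n) = R" for m
  proof (induction m)
    case 0 then show ?case using i0 by simp
  next
    case (Suc m)
    have "(i0 + m) mod ?n < ?n" using n0 by simp
    then have "W ! (Suc ((i0 + m) mod ?n) mod ?n) = R" using H Suc by blast
    then show ?case by (simp add: mod_Suc_eq)
  qed
  obtain j where j: "j < ?n" "W ! j = L" using assms(1) by (metis in_set_conv_nth)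
  have "(i0 + (j + ?n - i0)) mod ?n = j" using i0 j by simp
  then have "W ! j = R" using all[of "j + ?n - i0"] by simp
  then show False using j by simp
qed

lemma part2:
  assumes pw: "primitive_word W" and nL: "W \<noteq> [L]" and nR: "W \<noteq> [R]"
  shows "\<exists>Q\<in>Qplus. word_braid W = word_braid (WQ Q)"
proof -
  let ?n = "length W"
  have cW: "card (rots W) = ?n" using primitive_card_rots[OF pw] .
  have Wne: "W \<noteq> []" using pw primitive_word_def by simp
  have n2: "2 \<le> ?n"
  proof (rule ccontr)
    assume "\<not> 2 \<le> ?n"
    then have "?n = 1" using Wne by (cases W) (auto simp: not_le)
    then obtain x where "W = [x]" by (cases W) auto
    then show False using nL nR by (cases x) auto
  qed
  have LR: "L \<in> set W" "R \<in> set W" using card_rots_LR[OF cW n2] by auto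
  obtain i where i: "i < ?n" "W ! i = R" "W ! (Suc i mod ?n) = L" using find_RL[OF LR] by blast
  define V where "V = rotate (Suc i) W"
  have rV: "rots V = rots W" unfolding V_def by (rule rots_rotate)
  have lV: "length V = ?n" unfolding V_def by simp
  have cV: "card (rots V) = length V" using rV lV cW by simp
  have Vne: "V \<noteq> []" using Wne V_def by simp
  have hV: "hd V = L" unfolding V_def using hd_rotate_conv_nth[OF Wne, of "Suc i"] i by simp
  have lastV: "last V = R"
  proof -
    have "last V = V ! (?n - 1)" using Vne lV by (simp add: last_conv_nth)
    also have "\<dots> = W ! ((Suc i + (?n - 1)) mod ?n)" unfolding V_def using n2 by (intro nth_rotate) simp
    also have "(Suc i + (?n - 1)) mod ?n = i"
    proof -
      have "Suc i + (?n - 1) = i + ?n" using n2 by simp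
      then show ?thesis using i by simp
    qed
    finally show ?thesis using i by simp
  qed
  obtain es where es: "V = enc True es" "\<forall>e\<in>set es. 1 \<le> e" using enc_exists[of V True] hV by (auto simp: lt_def)
  have esne: "es \<noteq> []" using es Vne by auto
  have eves: "even (length es)"
  proof (rule ccontr)
    assume "odd (length es)"
    then have "last V = lt True" using last_enc[OF esne es(2), of True] es(1) by simp
    then show False using lastV by (simp add: lt_def)
  qed
  obtain Q where QP: "Q \<in> Qplus" and dg: "\<forall>k. cf_digit (wQ Q) k = int (es ! (k mod length es))"
    using construct_Q[OF es(2) eves esne] by blast
  have "enc True (map (\<lambda>i. nat (cf_digit (wQ Q) (cf_even_preperiod (wQ Q) + i))) [0..<cf_even_period (wQ Q)])
      = enc True es"
    by (rule G2[OF es(2) eves esne cV[unfolded es(1)] dg cf_period_per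
          cf_preperiod_def[unfolded cf_period_per[symmetric]] cf_even_preperiod_def cf_even_period_def refl])
  then have "WQ Q = V" using es(1) WQ_enc by simp
  then have "word_braid W = word_braid (WQ Q)" using word_braid_rots[of W V] rV lV by simp
  then show ?thesis using QP by blast
qed

theorem proposition2p14:
  shows "(\<forall>Q \<in> Qplus. word_braid (WQ Q) = form_braid Q)
       \<and> (\<forall>W. primitive_word W \<and> W \<noteq> [L] \<and> W \<noteq> [R] \<longrightarrow>
              (\<exists>Q \<in> Qplus. word_braid W = form_braid Q))"
proof -
  have p1: "word_braid (WQ Q) = form_braid Q" if "Q \<in> Qplus" for Q
    using main_braid part1[OF that] form_braid_eq by simp
  show ?thesis
  proof (intro conjI ballI allI impI)
    fix Q assume "Q \<in> Qplus" then show "word_braid (WQ Q) = form_braid Q" by (rule p1)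
  next
    fix W assume "primitive_word W \<and> W \<noteq> [L] \<and> W \<noteq> [R]"
    then obtain Q where "Q \<in> Qplus" "word_braid W = word_braid (WQ Q)" using part2 by blast
    then show "\<exists>Q \<in> Qplus. word_braid W = form_braid Q" using p1 by auto
  qed
qed



end
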